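(* Let $d \ge 1$ and $L \ge 1$ be integers. For $l = 0, 1, \dots, L-1$ let ${\bf w}_l^{VV}, {\bf w}_l^{EV}, {\bf w}_l^{VE}, {\bf w}_l^{EE} \in \mathbb R^d$ and ${\bf b}_l^V, {\bf b}_l^E \in \mathbb R^d$ be parameter vectors. Given input vectors ${\bf v} = [v_1 \ \cdots \ v_d]^\top$ and ${\bf e} = [e_1 \ \cdots \ e_d]^\top$, set ${\bf v}_0 = {\bf v}$, ${\bf e}_0 = {\bf e}$ and, for $l = 0, \dots, L-1$, $$ {\bf v}_{l+1} = {\bf v}_l {\bf e}_l^\top {\bf w}_l^{VV} + {\bf e}_l {\bf v}_l^\top {\bf w}_l^{EV} + {\bf b}_l^V, \qquad {\bf e}_{l+1} = {\bf v}_l {\bf e}_l^\top {\bf w}_l^{VE} + {\bf e}_l {\bf v}_l^\top {\bf w}_l^{EE} + {\bf b}_l^E. $$ Then the cross terms in ${\bf v}$ and ${\bf e}$ of maximal degree in $\|{\bf v}_L\|_1$ and in $\|{\bf e}_L\|_1$ (viewed as polynomial expressions in $v_1,\dots,v_d,e_1,\dots,e_d$ inside the absolute value) are of the form $k_{\boldsymbol\alpha,\boldsymbol\beta}\, v_1^{\alpha_1}\cdots v_d^{\alpha_d} e_1^{\beta_1}\cdots e_d^{\beta_d}$ with $k_{\boldsymbol\alpha,\boldsymbol\beta} \in \mathbb R$, $\alpha_i, \beta_i \in \mathbb N$, $\alpha_1 + \cdots + \alpha_d = 2^{L-1}$ and $\beta_1 + \cdots + \beta_d = 2^{L-1}$.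
   Context: The map $({\bf v}_l,{\bf e}_l)\mapsto({\bf v}_{l+1},{\bf e}_{l+1})$ above is the "cross\&compress unit": ${\bf C}_l = {\bf v}_l{\bf e}_l^\top$ is the cross feature matrix and ${\bf v}_{l+1} = {\bf C}_l{\bf w}_l^{VV} + {\bf C}_l^\top{\bf w}_l^{EV} + {\bf b}_l^V$, ${\bf e}_{l+1} = {\bf C}_l{\bf w}_l^{VE} + {\bf C}_l^\top{\bf w}_l^{EE} + {\bf b}_l^E$. In this statement, for ${\bf x} = [x^{(1)} \ \cdots \ x^{(d)}]^\top$, the notation $\|{\bf x}\|_1$ denotes $\left|\sum_{i=1}^d x^{(i)}\right|$. A cross term is a monomial involving both entries of ${\bf v}$ and entries of ${\bf e}$. *)

theory Defs
  imports Complex_Main "HOL-Library.Poly_Mapping"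
begin

text \<open>Formal real polynomials in the 2d variables v_1..v_d (encoded as Inl i, i < d)
  and e_1..e_d (encoded as Inr i, i < d).\<close>

type_synonym mono = "(nat + nat) \<Rightarrow>\<^sub>0 nat"
type_synonym rpoly = "mono \<Rightarrow>\<^sub>0 real"

definition pconst :: "real \<Rightarrow> rpoly" where
  "pconst c = Poly_Mapping.single 0 c"

definition pvar :: "nat + nat \<Rightarrow> rpoly" where
  "pvar x = Poly_Mapping.single (Poly_Mapping.single x 1) 1"

definition pdot :: "nat \<Rightarrow> (nat \<Rightarrow> rpoly) \<Rightarrow> (nat \<Rightarrow> real) \<Rightarrow> rpoly" where
  "pdot d x w = (\<Sum>j<d. x j * pconst (w j))"

text \<open>Returns (v_l, e_l) as polynomial vectors.
  v_{l+1} = v_l e_l^T wVV + e_l v_l^T wEV + bV, componentwise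
  (v_l e_l^T w)_i = v_l,i (e_l . w).\<close>
primrec cross_compress ::
  "nat \<Rightarrow> (nat \<Rightarrow> nat \<Rightarrow> real) \<Rightarrow> (nat \<Rightarrow> nat \<Rightarrow> real) \<Rightarrow> (nat \<Rightarrow> nat \<Rightarrow> real)
   \<Rightarrow> (nat \<Rightarrow> nat \<Rightarrow> real) \<Rightarrow> (nat \<Rightarrow> nat \<Rightarrow> real) \<Rightarrow> (nat \<Rightarrow> nat \<Rightarrow> real)
   \<Rightarrow> nat \<Rightarrow> (nat \<Rightarrow> rpoly) \<times> (nat \<Rightarrow> rpoly)" where
  "cross_compress d wVV wEV wVE wEE bV bE 0 = ((\<lambda>i. pvar (Inl i)), (\<lambda>i. pvar (Inr i)))"
| "cross_compress d wVV wEV wVE wEE bV bE (Suc l) =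
     (let (v, e) = cross_compress d wVV wEV wVE wEE bV bE l in
      ((\<lambda>i. v i * pdot d e (wVV l) + e i * pdot d v (wEV l) + pconst (bV l i)),
       (\<lambda>i. v i * pdot d e (wVE l) + e i * pdot d v (wEE l) + pconst (bE l i))))"

text \<open>The polynomial inside the absolute value of ||x||_1 = |sum_i x_i|.\<close>
definition psum :: "nat \<Rightarrow> (nat \<Rightarrow> rpoly) \<Rightarrow> rpoly" where
  "psum d x = (\<Sum>i<d. x i)"

definition vdeg :: "nat \<Rightarrow> mono \<Rightarrow> nat" where
  "vdeg d m = (\<Sum>i<d. Poly_Mapping.lookup m (Inl i))"
definition edeg :: "nat \<Rightarrow> mono \<Rightarrow> nat" where
  "edeg d m = (\<Sum>i<d. Poly_Mapping.lookup m (Inr i))"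

definition cross_terms :: "nat \<Rightarrow> rpoly \<Rightarrow> mono set" where
  "cross_terms d p = {m \<in> Poly_Mapping.keys p. vdeg d m > 0 \<and> edeg d m > 0}"

end

theory Submission
  imports Defs
begin

definition bnd :: "nat \<Rightarrow> nat \<Rightarrow> nat \<Rightarrow> rpoly \<Rightarrow> bool" where
  "bnd d a b p = (\<forall>m\<in>Poly_Mapping.keys p. vdeg d m \<le> a \<and> edeg d m \<le> b)"

lemma vdeg_add: "vdeg d (m1 + m2) = vdeg d m1 + vdeg d m2"
  by (simp add: vdeg_def lookup_add sum.distrib)

lemma edeg_add: "edeg d (m1 + m2) = edeg d m1 + edeg d m2"
  by (simp add: edeg_def lookup_add sum.distrib)

lemma bnd_mult: "bnd d a b p \<Longrightarrow> bnd d a' b' q \<Longrightarrow> bnd d (a+a') (b+b') (p*q)"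
  unfolding bnd_def
proof
  fix m assume A: "\<forall>m\<in>Poly_Mapping.keys p. vdeg d m \<le> a \<and> edeg d m \<le> b"
    and B: "\<forall>m\<in>Poly_Mapping.keys q. vdeg d m \<le> a' \<and> edeg d m \<le> b'"
    and m: "m \<in> Poly_Mapping.keys (p*q)"
  have "m \<in> {x + y | x y. x \<in> Poly_Mapping.keys p \<and> y \<in> Poly_Mapping.keys q}"
    by (rule subsetD[OF keys_mult m])
  then obtain m1 m2 where mm: "m = m1 + m2" and k1: "m1 \<in> Poly_Mapping.keys p"
    and k2: "m2 \<in> Poly_Mapping.keys q"
    by auto
  have 1: "vdeg d m1 \<le> a" "edeg d m1 \<le> b" using A k1 by auto
  have 2: "vdeg d m2 \<le> a'" "edeg d m2 \<le> b'" using B k2 by auto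
  show "vdeg d m \<le> a + a' \<and> edeg d m \<le> b + b'"
    using add_mono[OF 1(1) 2(1)] add_mono[OF 1(2) 2(2)] by (simp add: mm vdeg_add edeg_add)
qed

lemma bnd_add: "bnd d a b p \<Longrightarrow> bnd d a b q \<Longrightarrow> bnd d a b (p+q)"
  unfolding bnd_def using subsetD[OF keys_add[of p q]] by (meson UnE)

lemma bnd_sum: "(\<And>i. i \<in> A \<Longrightarrow> bnd d a b (f i)) \<Longrightarrow> bnd d a b (sum f A)"
  unfolding bnd_def using subsetD[OF keys_sum[of f A]] by (meson UN_E)

lemma bnd_const: "bnd d a b (pconst c)"
  unfolding bnd_def pconst_def by (auto simp: vdeg_def edeg_def)

lemma bnd_mono: "bnd d a b p \<Longrightarrow> a \<le> a' \<Longrightarrow> b \<le> b' \<Longrightarrow> bnd d a' b' p"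
  unfolding bnd_def by (meson order_trans)

lemma bnd_v0: "bnd d 1 0 (pvar (Inl i))"
proof -
  have "(\<Sum>j<d. Poly_Mapping.lookup (Poly_Mapping.single (Inl i) (1::nat)) (Inl j))
        = (\<Sum>j<d. if i = j then 1 else 0)"
    by (rule sum.cong) (auto simp: lookup_single when_def)
  also have "\<dots> \<le> (1::nat)" by (simp add: sum.delta')
  finally have h1: "vdeg d (Poly_Mapping.single (Inl i) 1) \<le> 1" unfolding vdeg_def .
  have "(\<Sum>j<d. Poly_Mapping.lookup (Poly_Mapping.single (Inl i) (1::nat)) (Inr j)) = 0"
    by (rule sum.neutral) (auto simp: lookup_single when_def)
  then have h2: "edeg d (Poly_Mapping.single (Inl i) 1) = 0" unfolding edeg_def .
  show ?thesis unfolding bnd_def pvar_def using h1 h2 by simp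
qed

lemma bnd_e0: "bnd d 0 1 (pvar (Inr i))"
proof -
  have "(\<Sum>j<d. Poly_Mapping.lookup (Poly_Mapping.single (Inr i) (1::nat)) (Inr j))
        = (\<Sum>j<d. if i = j then 1 else 0)"
    by (rule sum.cong) (auto simp: lookup_single when_def)
  also have "\<dots> \<le> (1::nat)" by (simp add: sum.delta')
  finally have h1: "edeg d (Poly_Mapping.single (Inr i) 1) \<le> 1" unfolding edeg_def .
  have "(\<Sum>j<d. Poly_Mapping.lookup (Poly_Mapping.single (Inr i) (1::nat)) (Inl j)) = 0"
    by (rule sum.neutral) (auto simp: lookup_single when_def)
  then have h2: "vdeg d (Poly_Mapping.single (Inr i) 1) = 0" unfolding vdeg_def .
  show ?thesis unfolding bnd_def pvar_def using h1 h2 by simp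
qed

lemma bnd_pdot:
  assumes X: "\<And>j. bnd d a b (x j)"
  shows "bnd d a b (pdot d x w)"
  unfolding pdot_def
proof (rule bnd_sum)
  fix j
  show "bnd d a b (x j * pconst (w j))" using bnd_mult[OF X[of j] bnd_const[of d 0 0 "w j"]]
    by simp
qed

lemma main:
  assumes "l \<ge> 1"
  shows "\<forall>i. bnd d (2^(l-1)) (2^(l-1)) (fst (cross_compress d wVV wEV wVE wEE bV bE l) i)
          \<and> bnd d (2^(l-1)) (2^(l-1)) (snd (cross_compress d wVV wEV wVE wEE bV bE l) i)"
  using assms
proof (induction l rule: dec_induct)
  case base
  have v: "\<And>i. bnd d 1 0 (pvar (Inl i))" by (rule bnd_v0)
  have e: "\<And>i. bnd d 0 1 (pvar (Inr i))" by (rule bnd_e0)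
  have pe: "\<And>w. bnd d 0 1 (pdot d (\<lambda>i. pvar (Inr i)) w)" by (rule bnd_pdot, rule e)
  have pv: "\<And>w. bnd d 1 0 (pdot d (\<lambda>i. pvar (Inl i)) w)" by (rule bnd_pdot, rule v)
  have m1: "\<And>i w. bnd d (Suc 0) (Suc 0) (pvar (Inl i) * pdot d (\<lambda>i. pvar (Inr i)) w)"
    using bnd_mult[OF v pe] by simp
  have m2: "\<And>i w. bnd d (Suc 0) (Suc 0) (pvar (Inr i) * pdot d (\<lambda>i. pvar (Inl i)) w)"
    using bnd_mult[OF e pv] by simp
  show ?case
    by simp (intro allI conjI bnd_add m1 m2 bnd_const)
next
  case (step l)
  obtain v e where ve: "cross_compress d wVV wEV wVE wEE bV bE l = (v, e)" by fastforce
  let ?a = "2^(l-1) :: nat"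
  have v: "\<And>i. bnd d ?a ?a (v i)" and e: "\<And>i. bnd d ?a ?a (e i)" using step.IH ve by auto
  have pe: "\<And>w. bnd d ?a ?a (pdot d e w)" by (rule bnd_pdot, rule e)
  have pv: "\<And>w. bnd d ?a ?a (pdot d v w)" by (rule bnd_pdot, rule v)
  have eq: "?a + ?a = 2 ^ l" using step.hyps
    by (cases l) auto
  have m1: "\<And>i w. bnd d (2 ^ l) (2 ^ l) (v i * pdot d e w)"
    using bnd_mult[OF v pe] eq by simp
  have m2: "\<And>i w. bnd d (2 ^ l) (2 ^ l) (e i * pdot d v w)"
    using bnd_mult[OF e pv] eq by simp
  show ?case using ve
    by (simp del: power_Suc) (intro allI conjI bnd_add m1 m2 bnd_const)
qed

theorem theorem1:
  fixes d L :: nat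
    and wVV wEV wVE wEE bV bE :: "nat \<Rightarrow> nat \<Rightarrow> real"
  assumes "d \<ge> 1" and "L \<ge> 1"
  shows "\<forall>p \<in> {psum d (fst (cross_compress d wVV wEV wVE wEE bV bE L)),
                  psum d (snd (cross_compress d wVV wEV wVE wEE bV bE L))}.
           (\<forall>m \<in> cross_terms d p. vdeg d m + edeg d m \<le> 2 ^ L) \<and>
           (\<forall>m \<in> cross_terms d p. vdeg d m + edeg d m = 2 ^ L \<longrightarrow>
               vdeg d m = 2 ^ (L - 1) \<and> edeg d m = 2 ^ (L - 1))"
proof -
  let ?a = "2^(L-1) :: nat"
  have L2: "?a + ?a = 2 ^ L" using assms(2) by (cases L) auto
  have B: "bnd d ?a ?a p" if "p \<in> {psum d (fst (cross_compress d wVV wEV wVE wEE bV bE L)),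
                  psum d (snd (cross_compress d wVV wEV wVE wEE bV bE L))}" for p
    using that main[OF assms(2), of d wVV wEV wVE wEE bV bE] unfolding psum_def
    by (auto intro!: bnd_sum)
  have R: "(\<forall>m \<in> cross_terms d p. vdeg d m + edeg d m \<le> 2 ^ L) \<and>
           (\<forall>m \<in> cross_terms d p. vdeg d m + edeg d m = 2 ^ L \<longrightarrow>
               vdeg d m = 2 ^ (L - 1) \<and> edeg d m = 2 ^ (L - 1))" if p: "p \<in> {psum d (fst (cross_compress d wVV wEV wVE wEE bV bE L)),
                  psum d (snd (cross_compress d wVV wEV wVE wEE bV bE L))}" for p
  proof -
    have D: "vdeg d m \<le> ?a \<and> edeg d m \<le> ?a" if "m \<in> cross_terms d p" for m
      using B[OF p] that unfolding bnd_def cross_terms_def by auto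
    show ?thesis
    proof (rule conjI; intro ballI impI)
      fix m assume "m \<in> cross_terms d p"
      then show "vdeg d m + edeg d m \<le> 2 ^ L" using D L2 by fastforce
    next
      fix m assume "m \<in> cross_terms d p" "vdeg d m + edeg d m = 2 ^ L"
      then show "vdeg d m = 2 ^ (L - 1) \<and> edeg d m = 2 ^ (L - 1)" using D[of m] L2 by linarith
    qed
  qed
  show ?thesis using R by blast
qed

end
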